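(* Let $a,b>0$, $I=[g(b),b]$, $J=[f(a),a]$, and let $g$ and $f$ be decreasing homeomorphisms of $I$ and $J$ onto their images $g(I)\subseteq I$ and $f(J)\subseteq J$ such that (1) $0$ is a repelling fixed point of $g$ and $\{x_L,x_R\}$ with $x_L<0<x_R$ is an attracting period-two orbit of $g$, $g(x_L)=x_R$, $g(x_R)=x_L$; moreover $b>x_R$; (2) $0$ is a repelling fixed point of $f$ and $\{\overline{x}_L,\overline{x}_R\}$ with $\overline{x}_L<0<\overline{x}_R$ is an attracting period-two orbit of $f$, $f(\overline{x}_L)=\overline{x}_R$, $f(\overline{x}_R)=\overline{x}_L$; moreover $a>\overline{x}_R$; (3) $g^2(x)<x$ for all $x\in(x_R,b]$; (4) $f^2(x)<x$ for all $x\in(\overline{x}_R,a]$. Then there exists a (not necessarily unique) homeomorphism $h:[f(a),\overline{x}_L]\cup[\overline{x}_R,a]\to[g(b),x_L]\cup[x_R,b]$ such that $g(h(x))=h(f(x))$ for all $x\in[f(a),\overline{x}_L]\cup[\overline{x}_R,a]$.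
   Context: A fixed point $p$ of a homeomorphism $\phi$ is attracting if there is a neighbourhood $U$ of $p$ with $\phi^n(x)\to p$ for all $x\in U$, and repelling if it is attracting for $\phi^{-1}$. A period-two orbit $\{p,q\}$ of $\phi$ is attracting if $p$ and $q$ are attracting fixed points of $\phi^2=\phi\circ\phi$. *)

theory Defs
  imports "HOL-Analysis.Analysis"
begin

definition decr_self_homeo :: "real set \<Rightarrow> (real \<Rightarrow> real) \<Rightarrow> bool" where
  "decr_self_homeo S \<phi> \<longleftrightarrow>
     (\<exists>\<psi>. homeomorphism S (\<phi> ` S) \<phi> \<psi>) \<and> \<phi> ` S \<subseteq> S \<and>
     (\<forall>x\<in>S. \<forall>y\<in>S. x < y \<longrightarrow> \<phi> y < \<phi> x)"

definition attracting_fp :: "real set \<Rightarrow> (real \<Rightarrow> real) \<Rightarrow> real \<Rightarrow> bool" where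
  "attracting_fp S \<phi> p \<longleftrightarrow> p \<in> S \<and> \<phi> p = p \<and>
     (\<exists>U. open U \<and> p \<in> U \<and> (\<forall>x\<in>U \<inter> S. (\<lambda>n. (\<phi> ^^ n) x) \<longlonglongrightarrow> p))"

text \<open>p is a repelling fixed point of \<phi> on S: attracting for \<phi>\<inverse>, i.e. there is a
  neighbourhood U of p such that for every x in U the backward orbit
  x, \<phi>\<inverse>(x), \<phi>\<inverse>\<inverse>(x), ... is defined (stays in S) and tends to p.\<close>
definition repelling_fp :: "real set \<Rightarrow> (real \<Rightarrow> real) \<Rightarrow> real \<Rightarrow> bool" where
  "repelling_fp S \<phi> p \<longleftrightarrow> p \<in> S \<and> \<phi> p = p \<and>
     (\<exists>U. open U \<and> p \<in> U \<and>
        (\<forall>x\<in>U. \<exists>s. s 0 = x \<and> (\<forall>n. s (Suc n) \<in> S \<and> \<phi> (s (Suc n)) = s n) \<and>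
                   s \<longlonglongrightarrow> p))"

definition attracting_2orbit :: "real set \<Rightarrow> (real \<Rightarrow> real) \<Rightarrow> real \<Rightarrow> real \<Rightarrow> bool" where
  "attracting_2orbit S \<phi> p q \<longleftrightarrow> attracting_fp S (\<phi> \<circ> \<phi>) p \<and> attracting_fp S (\<phi> \<circ> \<phi>) q"

end

theory Submission imports Defs begin

lemma mono_onto_cont:
  fixes h :: "real \<Rightarrow> real"
  assumes cd: "c \<le> d" and img: "h ` {c..d} = {c'..d'}"
    and mono: "\<And>x y. x \<in> {c..d} \<Longrightarrow> y \<in> {c..d} \<Longrightarrow> x \<le> y \<Longrightarrow> h x \<le> h y"
  shows "continuous_on {c..d} h"
proof -
  have hr: "\<And>x. x \<in> {c..d} \<Longrightarrow> h x \<in> {c'..d'}" using img by blast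
  have cd': "c' \<le> d'" using hr[of c] cd by auto
  have "c' \<in> h ` {c..d}" using img cd' by auto
  then obtain z where z: "z \<in> {c..d}" "c' = h z" by auto
  have hc: "h c = c'" using mono[of c z] z hr[of c] cd by auto
  have "d' \<in> h ` {c..d}" using img cd' by auto
  then obtain z' where z': "z' \<in> {c..d}" "d' = h z'" by auto
  have hd: "h d = d'" using mono[of z' d] z' hr[of d] cd by auto
  define H where "H x = (if x < c then c' + (x - c) else if x > d then d' + (x - d) else h x)" for x
  have Hmono: "H x \<le> H y" if xy: "x \<le> y" for x y
  proof -
    have A: "x < c \<Longrightarrow> H x = c' + (x - c)" by (simp add: H_def)
    have B: "x > d \<Longrightarrow> H x = d' + (x - d)" using cd by (simp add: H_def)
    have C: "x \<in> {c..d} \<Longrightarrow> H x = h x" by (simp add: H_def)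
    have A': "y < c \<Longrightarrow> H y = c' + (y - c)" by (simp add: H_def)
    have B': "y > d \<Longrightarrow> H y = d' + (y - d)" using cd by (simp add: H_def)
    have C': "y \<in> {c..d} \<Longrightarrow> H y = h y" by (simp add: H_def)
    have D: "x \<in> {c..d} \<Longrightarrow> c' \<le> h x \<and> h x \<le> d'" using hr[of x] by simp
    have D': "y \<in> {c..d} \<Longrightarrow> c' \<le> h y \<and> h y \<le> d'" using hr[of y] by simp
    have E: "x \<in> {c..d} \<Longrightarrow> y \<in> {c..d} \<Longrightarrow> h x \<le> h y" using mono[of x y] xy by simp
    show ?thesis
    proof (cases "x < c")
      case True
      then show ?thesis
      proof (cases "y < c")
        case True then show ?thesis using A A' \<open>x < c\<close> xy by simp
      next
        case False
        then show ?thesis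
        proof (cases "y > d")
          case True then show ?thesis using A B' \<open>x < c\<close> cd' by simp
        next
          case False then have "y \<in> {c..d}" using \<open>\<not> y < c\<close> by simp
          then show ?thesis using A C' D' \<open>x < c\<close> by simp
        qed
      qed
    next
      case False
      show ?thesis
      proof (cases "x > d")
        case True then have "y > d" using xy by simp
        then show ?thesis using B B' \<open>x > d\<close> xy by simp
      next
        case False then have x: "x \<in> {c..d}" using \<open>\<not> x < c\<close> by simp
        show ?thesis
        proof (cases "y > d")
          case True then show ?thesis using C B' D x by simp
        next
          case False then have "y \<in> {c..d}" using xy x by simp
          then show ?thesis using C C' E x by simp
        qed
      qed
    qed
  qed
  have "H ` UNIV = UNIV"
  proof safe
    fix v :: real
    show "v \<in> range H"
    proof (cases "v < c'")
      case True
      then have "H (c + (v - c')) = v" by (auto simp: H_def)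
      then show ?thesis by (metis rangeI)
    next
      case False
      show ?thesis
      proof (cases "v > d'")
        case True
        then have "H (d + (v - d')) = v" using cd by (auto simp: H_def)
        then show ?thesis by (metis rangeI)
      next
        case False
        then have "v \<in> h ` {c..d}" using img \<open>\<not> v < c'\<close> by auto
        then obtain w where "w \<in> {c..d}" "v = h w" by auto
        then have "H w = v" by (auto simp: H_def)
        then show ?thesis by (metis rangeI)
      qed
    qed
  qed auto
  then have "continuous_on UNIV H" by (intro continuous_onI_mono) (auto intro: Hmono)
  then have "continuous_on {c..d} H" by (rule continuous_on_subset) auto
  moreover have "continuous_on {c..d} h = continuous_on {c..d} H"
    by (rule continuous_on_cong) (auto simp: H_def)
  ultimately show ?thesis by simp
qed

locale contr =
  fixes F :: "real \<Rightarrow> real" and p q :: real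
  assumes pq: "p < q"
    and cont: "continuous_on {p..q} F"
    and smono: "\<And>x y. x \<in> {p..q} \<Longrightarrow> y \<in> {p..q} \<Longrightarrow> x < y \<Longrightarrow> F x < F y"
    and fixp: "F p = p"
    and below: "\<And>x. x \<in> {p<..q} \<Longrightarrow> F x < x"
begin

lemma wmono: "x \<in> {p..q} \<Longrightarrow> y \<in> {p..q} \<Longrightarrow> x \<le> y \<Longrightarrow> F x \<le> F y"
  using smono[of x y] by (cases "x = y") auto

lemma F_in: "x \<in> {p..q} \<Longrightarrow> F x \<in> {p..q}"
proof -
  assume x: "x \<in> {p..q}"
  have "p \<le> F x" using wmono[of p x] x fixp pq by auto
  moreover have "F x \<le> x" using below[of x] x fixp by (cases "x = p") auto
  ultimately show ?thesis using x by auto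
qed

lemma Fn_in: "x \<in> {p..q} \<Longrightarrow> (F^^n) x \<in> {p..q}"
proof (induction n)
  case (Suc n) then show ?case using F_in[of "(F^^n) x"] by simp
qed simp

lemma Fn_p: "(F^^n) p = p"
  by (induction n) (auto simp: fixp)

lemma Fn_smono: "x \<in> {p..q} \<Longrightarrow> y \<in> {p..q} \<Longrightarrow> x < y \<Longrightarrow> (F^^n) x < (F^^n) y"
proof (induction n)
  case (Suc n) then show ?case using smono[OF Fn_in[of x n] Fn_in[of y n]] by simp
qed simp

lemma Fn_wmono: "x \<in> {p..q} \<Longrightarrow> y \<in> {p..q} \<Longrightarrow> x \<le> y \<Longrightarrow> (F^^n) x \<le> (F^^n) y"
  using Fn_smono[of x y n] by (cases "x = y") auto

lemma Fn_gt: "x \<in> {p<..q} \<Longrightarrow> p < (F^^n) x"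
  using Fn_smono[of p x n] Fn_p pq by auto

lemma s_Suc_less: "F ((F^^n) q) < (F^^n) q"
proof -
  have "(F^^n) q \<in> {p<..q}" using Fn_gt[of q n] Fn_in[of q n] pq by auto
  thus ?thesis by (simp add: below)
qed

lemma s_less: "m < n \<Longrightarrow> (F^^n) q < (F^^m) q"
proof (induction n)
  case 0 thus ?case by simp
next
  case (Suc n)
  then show ?case using s_Suc_less[of n] by (cases "m = n") auto
qed

lemma s_le: "m \<le> n \<Longrightarrow> (F^^n) q \<le> (F^^m) q"
  by (metis le_neq_implies_less less_imp_le order_refl s_less)

lemma s_lim: "(\<lambda>n. (F^^n) q) \<longlonglongrightarrow> p"
proof -
  have dec: "decseq (\<lambda>n. (F^^n) q)" using s_le by (simp add: decseq_def)
  have bdd: "\<forall>n. p \<le> (F^^n) q" using Fn_in[of q] pq by auto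
  obtain L where L: "(\<lambda>n. (F^^n) q) \<longlonglongrightarrow> L" "\<forall>i. L \<le> (F^^i) q"
    using decseq_convergent[OF dec bdd] by blast
  have "p \<le> L" using LIMSEQ_le_const[OF L(1)] bdd by blast
  moreover have "L \<le> q" using L(2)[rule_format, of 0] by simp
  ultimately have Lpq: "L \<in> {p..q}" by auto
  have "(\<lambda>n. F ((F^^n) q)) \<longlonglongrightarrow> F L"
    by (rule continuous_on_tendsto_compose[OF cont L(1) Lpq]) (use Fn_in pq in auto)
  moreover have "(\<lambda>n. F ((F^^n) q)) \<longlonglongrightarrow> L" using LIMSEQ_Suc[OF L(1)] by simp
  ultimately have "F L = L" using LIMSEQ_unique by blast
  then have "L = p" using below[of L] Lpq by (cases "L = p") auto
  with L show ?thesis by simp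
qed

definition fd :: "nat \<Rightarrow> real set" where "fd n = {(F^^Suc n) q<..(F^^n) q}"

lemma fd_sub: "fd n \<subseteq> {p<..q}"
  using Fn_gt[of q "Suc n"] Fn_in[of q n] pq by (auto simp: fd_def)

lemma fd_exists: "x \<in> {p<..q} \<Longrightarrow> \<exists>n. x \<in> fd n"
proof -
  assume x: "x \<in> {p<..q}"
  have "\<exists>n. (F^^n) q < x" using order_tendstoD(2)[OF s_lim, of x] x
    by (auto simp: eventually_sequentially)
  then obtain n0 where "(F^^n0) q < x" by blast
  then have ex: "\<exists>n. (F^^Suc n) q < x" using s_le[of n0 "Suc n0"] by (intro exI[of _ n0]) auto
  define n where "n = (LEAST n. (F^^Suc n) q < x)"
  have 1: "(F^^Suc n) q < x" using LeastI_ex[OF ex] n_def by simp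
  have 2: "x \<le> (F^^n) q"
  proof (cases n)
    case 0 thus ?thesis using x by simp
  next
    case (Suc k)
    then have "\<not> (F^^Suc k) q < x" using not_less_Least[of k "\<lambda>n. (F^^Suc n) q < x"] n_def by simp
    thus ?thesis using Suc by simp
  qed
  show ?thesis using 1 2 by (auto simp: fd_def)
qed

lemma fd_lt: "x \<in> fd n \<Longrightarrow> x \<in> fd m \<Longrightarrow> n < m \<Longrightarrow> False"
  using s_le[of "Suc n" m] by (auto simp: fd_def)

lemma fd_unique: "x \<in> fd n \<Longrightarrow> x \<in> fd m \<Longrightarrow> n = m"
  by (metis fd_lt linorder_neqE_nat)

lemma fd_less: "x \<in> fd n \<Longrightarrow> y \<in> fd m \<Longrightarrow> m < n \<Longrightarrow> x < y"
  using s_le[of "Suc m" n] by (auto simp: fd_def)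

lemma fd_order: "x \<in> fd n \<Longrightarrow> y \<in> fd m \<Longrightarrow> x < y \<Longrightarrow> m \<le> n"
  using fd_less[of y m x n] by (metis less_asym not_le)

lemma fd0: "fd 0 = {F q<..q}" by (simp add: fd_def)

lemma fd_img: "y \<in> fd 0 \<Longrightarrow> (F^^n) y \<in> fd n"
proof -
  assume y: "y \<in> fd 0"
  have Fq: "F q \<in> {p..q}" using F_in pq by auto
  have yy: "y \<in> {p..q}" "F q < y" "y \<le> q" using y Fq by (auto simp: fd0)
  have "(F^^n) (F q) < (F^^n) y" using Fn_smono[OF Fq yy(1) yy(2)] .
  moreover have "(F^^n) y \<le> (F^^n) q" using Fn_wmono[OF yy(1) _ yy(3)] pq by auto
  ultimately show ?thesis by (simp add: fd_def funpow_swap1)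
qed

lemma fd_surj: "x \<in> fd n \<Longrightarrow> \<exists>y \<in> fd 0. (F^^n) y = x"
proof (induction n arbitrary: x)
  case 0 then show ?case by force
next
  case (Suc n)
  let ?t = "(F^^n) q"
  from Suc.prems have x: "F (F ?t) < x" "x \<le> F ?t" by (auto simp: fd_def)
  have t: "?t \<in> {p..q}" using Fn_in pq by auto
  have Ft: "F ?t \<in> {p..q}" using F_in t by auto
  have px: "p < x" using Fn_gt[of q "Suc (Suc n)"] x pq by auto
  have ct: "continuous_on {p..?t} F" by (rule continuous_on_subset[OF cont]) (use t in auto)
  obtain z where z: "p \<le> z" "z \<le> ?t" "F z = x"
    using IVT'[of F p x ?t, OF _ _ _ ct] fixp px x t by auto
  have zin: "z \<in> {p..q}" using z t by auto
  have "F ?t < z"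
  proof (rule ccontr)
    assume "\<not> F ?t < z"
    then have "F z \<le> F (F ?t)" using wmono[OF zin Ft] by auto
    then show False using x z by auto
  qed
  then have "z \<in> fd n" using z by (simp add: fd_def)
  from Suc.IH[OF this] obtain y where "y \<in> fd 0" "(F^^n) y = z" by blast
  then show ?case using z by auto
qed

definition idx where "idx x = (THE n. x \<in> fd n)"
definition rep where "rep x = (THE y. y \<in> fd 0 \<and> (F^^idx x) y = x)"

lemma idx_eq: "x \<in> fd n \<Longrightarrow> idx x = n"
  unfolding idx_def using fd_unique by (intro the_equality) auto

lemma Fn_inj: "y \<in> fd 0 \<Longrightarrow> y' \<in> fd 0 \<Longrightarrow> (F^^n) y = (F^^n) y' \<Longrightarrow> y = y'"
proof -
  assume a: "y \<in> fd 0" "y' \<in> fd 0" "(F^^n) y = (F^^n) y'"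
  have b: "y \<in> {p..q}" "y' \<in> {p..q}" using a(1,2) fd_sub[of 0] by auto
  show ?thesis using Fn_smono[OF b(1) b(2), of n] Fn_smono[OF b(2) b(1), of n] a(3)
    by (cases y y' rule: linorder_cases) auto
qed

lemma rep_eq: "y \<in> fd 0 \<Longrightarrow> rep ((F^^n) y) = y \<and> idx ((F^^n) y) = n"
proof -
  assume y: "y \<in> fd 0"
  have i: "idx ((F^^n) y) = n" using idx_eq fd_img y by blast
  have "rep ((F^^n) y) = y" unfolding rep_def i using y Fn_inj by (intro the_equality) auto
  with i show ?thesis by simp
qed

lemma rep_props: "x \<in> {p<..q} \<Longrightarrow> rep x \<in> fd 0 \<and> (F^^idx x) (rep x) = x \<and> x \<in> fd (idx x)"
proof -
  assume "x \<in> {p<..q}"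
  then obtain n where n: "x \<in> fd n" using fd_exists by blast
  then obtain y where y: "y \<in> fd 0" "(F^^n) y = x" using fd_surj by blast
  then show ?thesis using rep_eq[OF y(1), of n] n by auto
qed

end


lemma conj_incr:
  assumes A: "contr F p q" and B: "contr G p' q'"
  shows "\<exists>h. continuous_on {p..q} h \<and> h ` {p..q} = {p'..q'} \<and>
    (\<forall>x\<in>{p..q}. \<forall>y\<in>{p..q}. x < y \<longrightarrow> h x < h y) \<and> (\<forall>x\<in>{p..q}. h (F x) = G (h x))"
proof -
  interpret A: contr F p q by fact
  interpret B: contr G p' q' by fact
  have Fq: "F q < q" using A.below A.pq by auto
  have Gq: "G q' < q'" using B.below B.pq by auto
  define r where "r = (q' - G q') / (q - F q)"
  have r: "r > 0" using Fq Gq by (simp add: r_def)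
  have r2: "(q - F q) * r = q' - G q'" using Fq by (simp add: r_def)
  define h0 where "h0 y = G q' + (y - F q) * r" for y
  define k0 where "k0 w = F q + (w - G q') / r" for w
  have h0_in: "h0 y \<in> B.fd 0" if "y \<in> A.fd 0" for y
  proof -
    have y: "F q < y" "y \<le> q" using that by (auto simp: A.fd0)
    have "(y - F q) * r > 0" using y r by simp
    moreover have "(y - F q) * r \<le> (q - F q) * r" using y r by (intro mult_right_mono) auto
    ultimately show ?thesis using r2 by (auto simp: B.fd0 h0_def)
  qed
  have k0_in: "k0 w \<in> A.fd 0" if "w \<in> B.fd 0" for w
  proof -
    have w: "G q' < w" "w \<le> q'" using that by (auto simp: B.fd0)
    have "(w - G q') / r > 0" using w r by simp
    moreover have "(w - G q') / r \<le> (q' - G q') / r" using w r by (intro divide_right_mono) auto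
    moreover have "(q' - G q') / r = q - F q" using r2 r by (simp add: field_simps)
    ultimately show ?thesis by (auto simp: A.fd0 k0_def)
  qed
  have h0k0: "h0 (k0 w) = w" for w using r by (simp add: h0_def k0_def)
  have h0_mono: "y < y' \<Longrightarrow> h0 y < h0 y'" for y y' using r by (simp add: h0_def)
  define h where "h x = (if x \<le> p then p' else (G^^A.idx x) (h0 (A.rep x)))" for x
  have h_p: "h p = p'" by (simp add: h_def)
  have h_F: "h ((F^^n) y) = (G^^n) (h0 y)" if y: "y \<in> A.fd 0" for y n
  proof -
    have "(F^^n) y \<in> A.fd n" using A.fd_img y .
    then have "\<not> (F^^n) y \<le> p" using A.fd_sub by fastforce
    then show ?thesis using A.rep_eq[OF y, of n] by (simp add: h_def)
  qed
  have h_rng: "h x \<in> B.fd (A.idx x)" if x: "x \<in> {p<..q}" for x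
  proof -
    have R: "A.rep x \<in> A.fd 0" "(F^^A.idx x) (A.rep x) = x" using A.rep_props[OF x] by auto
    have "h x = (G^^A.idx x) (h0 (A.rep x))" using h_F[OF R(1), of "A.idx x"] R(2) by simp
    then show ?thesis using B.fd_img[OF h0_in[OF R(1)]] by simp
  qed
  have h_rng2: "h x \<in> {p'<..q'}" if x: "x \<in> {p<..q}" for x
    using h_rng[OF x] B.fd_sub by blast
  have smono: "\<forall>x\<in>{p..q}. \<forall>y\<in>{p..q}. x < y \<longrightarrow> h x < h y"
  proof safe
    fix x y assume x: "x \<in> {p..q}" and y: "y \<in> {p..q}" and xy: "x < y"
    have y': "y \<in> {p<..q}" using x y xy by auto
    show "h x < h y"
    proof (cases "x = p")
      case True then show ?thesis using h_p h_rng2[OF y'] by auto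
    next
      case False
      then have x': "x \<in> {p<..q}" using x by auto
      have Rx: "A.rep x \<in> A.fd 0" "(F^^A.idx x) (A.rep x) = x" "x \<in> A.fd (A.idx x)"
        using A.rep_props[OF x'] by auto
      have Ry: "A.rep y \<in> A.fd 0" "(F^^A.idx y) (A.rep y) = y" "y \<in> A.fd (A.idx y)"
        using A.rep_props[OF y'] by auto
      have le: "A.idx y \<le> A.idx x" using A.fd_order[OF Rx(3) Ry(3) xy] .
      show ?thesis
      proof (cases "A.idx y = A.idx x")
        case True
        have sub: "A.fd 0 \<subseteq> {p..q}" using A.fd_sub[of 0] by auto
        have "A.rep x < A.rep y"
        proof (rule ccontr)
          assume "\<not> A.rep x < A.rep y"
          then have "(F^^A.idx x) (A.rep y) \<le> (F^^A.idx x) (A.rep x)"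
          proof -
            have m: "A.rep x \<in> {p..q}" "A.rep y \<in> {p..q}" using sub Rx(1) Ry(1) by auto
            show ?thesis using A.Fn_wmono[OF m(2) m(1)] \<open>\<not> A.rep x < A.rep y\<close> by simp
          qed
          then show False using Rx(2) Ry(2) True xy by simp
        qed
        then have "h0 (A.rep x) < h0 (A.rep y)" by (rule h0_mono)
        moreover have "h0 (A.rep x) \<in> {p'..q'}" "h0 (A.rep y) \<in> {p'..q'}"
          using h0_in[OF Rx(1)] h0_in[OF Ry(1)] B.fd_sub[of 0] by auto
        ultimately have "(G^^A.idx x) (h0 (A.rep x)) < (G^^A.idx x) (h0 (A.rep y))"
          using B.Fn_smono by blast
        then show ?thesis using h_F[OF Rx(1), of "A.idx x"] h_F[OF Ry(1), of "A.idx y"] Rx(2) Ry(2) True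
          by simp
      next
        case False
        then have "A.idx y < A.idx x" using le by simp
        then show ?thesis using B.fd_less[OF h_rng[OF x'] h_rng[OF y']] by simp
      qed
    qed
  qed
  have img: "h ` {p..q} = {p'..q'}"
  proof
    show "h ` {p..q} \<subseteq> {p'..q'}"
    proof
      fix v assume "v \<in> h ` {p..q}"
      then obtain x where x: "x \<in> {p..q}" "v = h x" by auto
      show "v \<in> {p'..q'}"
      proof (cases "x = p")
        case True then show ?thesis using x h_p B.pq by auto
      next
        case False then have "x \<in> {p<..q}" using x by auto
        then show ?thesis using h_rng2 x by fastforce
      qed
    qed
  next
    show "{p'..q'} \<subseteq> h ` {p..q}"
    proof
      fix v assume v: "v \<in> {p'..q'}"
      show "v \<in> h ` {p..q}"
      proof (cases "v = p'")
        case True then show ?thesis using h_p A.pq by (metis atLeastAtMost_iff image_eqI less_imp_le order_refl)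
      next
        case False
        then have v': "v \<in> {p'<..q'}" using v by auto
        have R: "B.rep v \<in> B.fd 0" "(G^^B.idx v) (B.rep v) = v" using B.rep_props[OF v'] by auto
        define y where "y = k0 (B.rep v)"
        have y: "y \<in> A.fd 0" "h0 y = B.rep v" using k0_in[OF R(1)] h0k0 by (auto simp: y_def)
        have "h ((F^^B.idx v) y) = v" using h_F[OF y(1)] y(2) R(2) by simp
        moreover have "(F^^B.idx v) y \<in> {p..q}" using A.fd_img[OF y(1), of "B.idx v"] A.fd_sub[of "B.idx v"] by auto
        ultimately show ?thesis by (metis image_eqI)
      qed
    qed
  qed
  have cont: "continuous_on {p..q} h"
    using A.pq img smono by (intro mono_onto_cont) (auto simp: le_less)
  have conj: "\<forall>x\<in>{p..q}. h (F x) = G (h x)"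
  proof
    fix x assume x: "x \<in> {p..q}"
    show "h (F x) = G (h x)"
    proof (cases "x = p")
      case True then show ?thesis using h_p A.fixp B.fixp by simp
    next
      case False then have x': "x \<in> {p<..q}" using x by auto
      have R: "A.rep x \<in> A.fd 0" "(F^^A.idx x) (A.rep x) = x" using A.rep_props[OF x'] by auto
      have "h (F x) = h ((F^^Suc (A.idx x)) (A.rep x))" using R(2) by simp
      also have "\<dots> = (G^^Suc (A.idx x)) (h0 (A.rep x))" using h_F[OF R(1)] .
      also have "\<dots> = G (h x)" using h_F[OF R(1), of "A.idx x"] R(2) by simp
      finally show ?thesis .
    qed
  qed
  show ?thesis using cont img smono conj by blast
qed

lemma decr_img:
  fixes \<phi> :: "real \<Rightarrow> real"
  assumes "c \<le> d" "continuous_on {c..d} \<phi>"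
    and "\<And>x y. x \<in> {c..d} \<Longrightarrow> y \<in> {c..d} \<Longrightarrow> x \<le> y \<Longrightarrow> \<phi> y \<le> \<phi> x"
  shows "\<phi> ` {c..d} = {\<phi> d..\<phi> c}"
proof
  show "\<phi> ` {c..d} \<subseteq> {\<phi> d..\<phi> c}" using assms by fastforce
  show "{\<phi> d..\<phi> c} \<subseteq> \<phi> ` {c..d}"
  proof
    fix v assume "v \<in> {\<phi> d..\<phi> c}"
    then obtain x where "c \<le> x" "x \<le> d" "\<phi> x = v" using IVT2'[of \<phi> d v c] assms by auto
    then show "v \<in> \<phi> ` {c..d}" by auto
  qed
qed


lemma map_props:
  fixes f :: "real \<Rightarrow> real" and a yL yR :: real
  assumes hom: "decr_self_homeo {f a..a} f"
    and orb: "yL < 0" "0 < yR" "f yL = yR" "f yR = yL" "attracting_2orbit {f a..a} f yL yR"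
    and agt: "a > yR"
    and f2: "\<forall>x\<in>{yR<..a}. f (f x) < x"
  shows "contr (\<lambda>x. f (f x)) yR a" "f ` {yR..a} = {f a..yL}" "continuous_on {f a..a} f"
    "\<forall>x\<in>{f a..a}. \<forall>y\<in>{f a..a}. x < y \<longrightarrow> f y < f x" "f a \<le> yL"
    "\<exists>\<psi>. continuous_on (f ` {f a..a}) \<psi> \<and> (\<forall>x\<in>{f a..a}. \<psi> (f x) = x)"
proof -
  let ?S = "{f a..a}"
  obtain \<psi> where hm: "homeomorphism ?S (f ` ?S) f \<psi>" and sub: "f ` ?S \<subseteq> ?S"
    and dec: "\<forall>x\<in>?S. \<forall>y\<in>?S. x < y \<longrightarrow> f y < f x"
    using hom unfolding decr_self_homeo_def by blast
  show "\<forall>x\<in>?S. \<forall>y\<in>?S. x < y \<longrightarrow> f y < f x" using dec .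
  have decD: "f y < f x" if "x \<in> ?S" "y \<in> ?S" "x < y" for x y
    using mp[OF bspec[OF bspec[OF dec that(1)] that(2)] that(3)] .
  have at: "attracting_fp ?S (f \<circ> f) yL" "attracting_fp ?S (f \<circ> f) yR"
    using orb(5) unfolding attracting_2orbit_def by simp_all
  have yin1: "yL \<in> ?S" using at(1) unfolding attracting_fp_def by (rule conjunct1)
  have yin2: "yR \<in> ?S" using at(2) unfolding attracting_fp_def by (rule conjunct1)
  note yin = yin1 yin2
  show "f a \<le> yL" using yin by auto
  have cf: "continuous_on ?S f" using hm by (simp add: homeomorphism_def)
  show "continuous_on ?S f" by fact
  have hm2: "continuous_on (f ` ?S) \<psi>" "\<forall>x\<in>?S. \<psi> (f x) = x"
    using hm unfolding homeomorphism_def by simp_all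
  show "\<exists>\<psi>. continuous_on (f ` ?S) \<psi> \<and> (\<forall>x\<in>?S. \<psi> (f x) = x)"
    using hm2 by (intro exI[of _ \<psi>] conjI)
  have Usub: "{yR..a} \<subseteq> ?S" using yin by auto
  have wdec: "f y \<le> f x" if "x \<in> {yR..a}" "y \<in> {yR..a}" "x \<le> y" for x y
  proof (cases "x = y")
    case False then have "x < y" using that by simp
    have "x \<in> ?S" "y \<in> ?S" using that(1,2) Usub by (simp_all add: subset_iff)
    then show ?thesis using decD \<open>x < y\<close> less_imp_le by metis
  qed simp
  have cU: "continuous_on {yR..a} f" using continuous_on_subset[OF cf Usub] .
  have img: "f ` {yR..a} = {f a..yL}" using decr_img[OF _ cU wdec] agt orb(4) by simp
  show "f ` {yR..a} = {f a..yL}" by fact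
  have LS: "{f a..yL} \<subseteq> ?S" using yin by auto
  show "contr (\<lambda>x. f (f x)) yR a"
  proof (rule contr.intro)
    show "yR < a" by fact
    show "continuous_on {yR..a} (\<lambda>x. f (f x))"
      by (rule continuous_on_compose2[OF cf cU]) (use img LS in auto)
    show "f (f x) < f (f y)" if "x \<in> {yR..a}" "y \<in> {yR..a}" "x < y" for x y
    proof -
      have m: "x \<in> ?S" "y \<in> ?S" using that(1,2) Usub by (simp_all add: subset_iff)
      have "f y < f x" by (rule decD[OF m that(3)])
      moreover have "f x \<in> {f a..yL}" "f y \<in> {f a..yL}"
        using imageI[OF that(1), of f] imageI[OF that(2), of f] img by simp_all
      moreover have "f x \<in> ?S" "f y \<in> ?S" using calculation(2,3) LS by (simp_all add: subset_iff)
      ultimately show ?thesis using decD by metis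
    qed
    show "f (f yR) = yR" using orb by simp
    show "f (f x) < x" if "x \<in> {yR<..a}" for x using bspec[OF f2 that] .
  qed
qed

theorem theorem5:
  fixes f g :: "real \<Rightarrow> real" and a b xL xR yL yR :: real
  assumes ab: "a > 0" "b > 0"
    and g_hom: "decr_self_homeo {g b..b} g"
    and f_hom: "decr_self_homeo {f a..a} f"
    and g_rep: "repelling_fp {g b..b} g 0"
    and g_orb: "xL < 0" "0 < xR" "g xL = xR" "g xR = xL" "attracting_2orbit {g b..b} g xL xR"
    and b_gt: "b > xR"
    and f_rep: "repelling_fp {f a..a} f 0"
    and f_orb: "yL < 0" "0 < yR" "f yL = yR" "f yR = yL" "attracting_2orbit {f a..a} f yL yR"
    and a_gt: "a > yR"
    and g2: "\<And>x. x \<in> {xR<..b} \<Longrightarrow> g (g x) < x"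
    and f2: "\<And>x. x \<in> {yR<..a} \<Longrightarrow> f (f x) < x"
  shows "\<exists>h h'. homeomorphism ({f a..yL} \<union> {yR..a}) ({g b..xL} \<union> {xR..b}) h h' \<and>
           (\<forall>x \<in> {f a..yL} \<union> {yR..a}. g (h x) = h (f x))"
proof -
  have f2': "\<forall>x\<in>{yR<..a}. f (f x) < x" using f2 by blast
  have g2': "\<forall>x\<in>{xR<..b}. g (g x) < x" using g2 by blast
  note Sf = map_props[OF f_hom f_orb a_gt f2']
  note Sg = map_props[OF g_hom g_orb b_gt g2']
  obtain h1 where h1: "continuous_on {yR..a} h1" "h1 ` {yR..a} = {xR..b}"
      "\<forall>x\<in>{yR..a}. \<forall>y\<in>{yR..a}. x < y \<longrightarrow> h1 x < h1 y"
      "\<forall>x\<in>{yR..a}. h1 (f (f x)) = g (g (h1 x))"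
    using conj_incr[OF Sf(1) Sg(1)] by auto
  obtain \<psi> where psi: "continuous_on (f ` {f a..a}) \<psi>" "\<forall>x\<in>{f a..a}. \<psi> (f x) = x"
    using Sf(6) by blast
  let ?L = "{f a..yL}" and ?U = "{yR..a}" and ?L' = "{g b..xL}" and ?U' = "{xR..b}"
  have US: "?U \<subseteq> {f a..a}" using Sf(5) f_orb by auto
  have U'S: "?U' \<subseteq> {g b..b}" using Sg(5) g_orb by auto
  have h1U: "h1 x \<in> ?U'" if "x \<in> ?U" for x using h1(2) that by blast
  have psiL: "\<psi> y \<in> ?U \<and> f (\<psi> y) = y" if "y \<in> ?L" for y
  proof -
    from that Sf(2) obtain x where x: "x \<in> ?U" "y = f x" by blast
    then have "\<psi> y = x" using psi(2) US by auto
    then show ?thesis using x by simp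
  qed
  have gU': "g w \<in> ?L'" if "w \<in> ?U'" for w using Sg(2) that by blast
  define h where "h x = (if x \<in> ?U then h1 x else g (h1 (\<psi> x)))" for x
  have LnU: "x \<notin> ?U" if "x \<in> ?L" for x using that f_orb by auto
  have hU: "h x = h1 x" if "x \<in> ?U" for x using that by (simp add: h_def)
  have hL: "h y = g (h1 (\<psi> y))" if "y \<in> ?L" for y unfolding h_def by (rule if_not_P[OF LnU[OF that]])
  have hL': "h y \<in> ?L'" if "y \<in> ?L" for y using hL[OF that] gU' h1U psiL[OF that] by simp
  have cpsi: "continuous_on ?L \<psi>"
  proof -
    have LfS: "?L \<subseteq> f ` {f a..a}" using image_mono[OF US, of f] Sf(2) by simp
    show ?thesis by (rule continuous_on_subset[OF psi(1) LfS])
  qed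
  have c2: "continuous_on ?L (\<lambda>y. h1 (\<psi> y))"
    by (rule continuous_on_compose2[OF h1(1) cpsi]) (use psiL in auto)
  have c3: "continuous_on ?L (\<lambda>y. g (h1 (\<psi> y)))"
  proof -
    have "(\<lambda>y. h1 (\<psi> y)) ` ?L \<subseteq> {g b..b}"
    proof
      fix v assume "v \<in> (\<lambda>y. h1 (\<psi> y)) ` ?L"
      then obtain y where y: "y \<in> ?L" "v = h1 (\<psi> y)" by blast
      then show "v \<in> {g b..b}" using psiL[OF y(1)] h1U U'S by blast
    qed
    then show ?thesis using continuous_on_compose2[OF Sg(3) c2] by blast
  qed
   have "continuous_on ?L h = continuous_on ?L (\<lambda>y. g (h1 (\<psi> y)))"
    by (rule continuous_on_cong[OF refl]) (rule hL)
  then have cL: "continuous_on ?L h" using c3 by simp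
  have "continuous_on ?U h = continuous_on ?U h1"
    by (rule continuous_on_cong[OF refl]) (rule hU)
  then have cU: "continuous_on ?U h" using h1(1) by simp
  have imgU0: "h ` ?U = h1 ` ?U" by (rule image_cong[OF refl]) (rule hU)
  have cont: "continuous_on (?L \<union> ?U) h" by (rule continuous_on_closed_Un[OF _ _ cL cU]) auto
  have imgU: "h ` ?U = ?U'" using h1(2) imgU0 by simp
  have imgL: "h ` ?L = ?L'"
  proof
    show "h ` ?L \<subseteq> ?L'" using hL' by blast
    show "?L' \<subseteq> h ` ?L"
    proof
      fix v assume "v \<in> ?L'"
      then obtain w where w: "w \<in> ?U'" "v = g w" using Sg(2) by blast
      then obtain x where x: "x \<in> ?U" "w = h1 x" using h1(2) by blast
      have fx: "f x \<in> ?L" using Sf(2) x(1) by blast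
      have "\<psi> (f x) = x" using psi(2) US x(1) by auto
      then have "h (f x) = v" using hL[OF fx] w x by simp
      then show "v \<in> h ` ?L" using fx by (metis image_eqI)
    qed
  qed
  have img: "h ` (?L \<union> ?U) = ?L' \<union> ?U'" using imgU imgL by (simp add: image_Un)
  have h1inj: "x = y" if "x \<in> ?U" "y \<in> ?U" "h1 x = h1 y" for x y
  proof (cases x y rule: linorder_cases)
    case less have "h1 x < h1 y" using h1(3)[rule_format, OF that(1) that(2) less] .
    then show ?thesis using that(3) by simp
  next
    case greater have "h1 y < h1 x" using h1(3)[rule_format, OF that(2) that(1) greater] .
    then show ?thesis using that(3) by simp
  qed
  have gdec: "g v < g w" if "v \<in> {g b..b}" "w \<in> {g b..b}" "w < v" for v w
  proof -
    have A: "\<forall>x\<in>{g b..b}. \<forall>y\<in>{g b..b}. x < y \<longrightarrow> g y < g x" using Sg(4) by simp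
    have "w < v \<longrightarrow> g v < g w" by (rule bspec[OF bspec[OF A that(2)] that(1)])
    then show ?thesis using that(3) by simp
  qed
  have ginj: "v = w" if "v \<in> {g b..b}" "w \<in> {g b..b}" "g v = g w" for v w
  proof (cases v w rule: linorder_cases)
    case less have "g w < g v" using gdec[OF that(2) that(1) less] .
    then show ?thesis using that(3) by simp
  next
    case greater have "g v < g w" using gdec[OF that(1) that(2) greater] .
    then show ?thesis using that(3) by simp
  qed
  have inj: "inj_on h (?L \<union> ?U)"
  proof (rule inj_onI)
    fix x y assume x: "x \<in> ?L \<union> ?U" and y: "y \<in> ?L \<union> ?U" and e: "h x = h y"
    have sep: "u \<noteq> v" if "u \<in> ?L'" "v \<in> ?U'" for u v using g_orb that by auto
    show "x = y"
    proof (cases "x \<in> ?U")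
      case xU: True
      show ?thesis
      proof (cases "y \<in> ?U")
        case yU: True
        have "h1 x = h1 y" using e hU[OF xU] hU[OF yU] by simp
        then show ?thesis by (rule h1inj[OF xU yU])
      next
        case False then have yL: "y \<in> ?L" using y by blast
        have "h y \<noteq> h x" using sep[OF hL'[OF yL] h1U[OF xU]] hU[OF xU] by simp
        then show ?thesis using e by simp
      qed
    next
      case xU: False
      then have xL: "x \<in> ?L" using x by blast
      show ?thesis
      proof (cases "y \<in> ?U")
        case yU: True
        have "h x \<noteq> h y" using sep[OF hL'[OF xL] h1U[OF yU]] hU[OF yU] by simp
        then show ?thesis using e by simp
      next
        case False then have yL: "y \<in> ?L" using y by blast
        have px: "\<psi> x \<in> ?U" "f (\<psi> x) = x" using psiL[OF xL] by auto
        have py: "\<psi> y \<in> ?U" "f (\<psi> y) = y" using psiL[OF yL] by auto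
        have m1: "h1 (\<psi> x) \<in> {g b..b}" using h1U[OF px(1)] U'S by blast
        have m2: "h1 (\<psi> y) \<in> {g b..b}" using h1U[OF py(1)] U'S by blast
        have "g (h1 (\<psi> x)) = g (h1 (\<psi> y))" using e hL[OF xL] hL[OF yL] by simp
        then have "h1 (\<psi> x) = h1 (\<psi> y)" by (rule ginj[OF m1 m2])
        then have "\<psi> x = \<psi> y" by (rule h1inj[OF px(1) py(1)])
        then show ?thesis using px(2) py(2) by metis
      qed
    qed
  qed
  obtain h' where hom: "homeomorphism (?L \<union> ?U) (?L' \<union> ?U') h h'"
    using homeomorphism_compact[OF compact_Un[OF compact_Icc compact_Icc] cont img inj] by blast
  have conj: "\<forall>x \<in> ?L \<union> ?U. g (h x) = h (f x)"
  proof
    fix x assume x: "x \<in> ?L \<union> ?U"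
    show "g (h x) = h (f x)"
    proof (cases "x \<in> ?U")
      case True
      have fx: "f x \<in> ?L" using Sf(2) True by blast
      have "\<psi> (f x) = x" using psi(2) US True by auto
      then show ?thesis using hL[OF fx] hU[OF True] by simp
    next
      case False
      then have xL: "x \<in> ?L" using x by auto
      have z: "\<psi> x \<in> ?U" "f (\<psi> x) = x" using psiL[OF xL] by auto
      have "f (f (\<psi> x)) \<in> ?U" using contr.F_in[OF Sf(1) z(1)] by simp
      then have "h (f x) = h1 (f (f (\<psi> x)))" using z hU by simp
      also have "\<dots> = g (g (h1 (\<psi> x)))" using bspec[OF h1(4) z(1)] .
      also have "\<dots> = g (h x)" using hL[OF xL] by simp
      finally show ?thesis by simp
    qed
  qed
  show ?thesis by (intro exI conjI) (rule hom, rule conj)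
qed

end
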